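(* Let $\mathcal{A}$ be a strong $T_0$-family and $\varepsilon>0$. Then $\mathcal{X}_\mathcal{A}$ does not admit any uncountable equilateral set, and the unit sphere of $\mathcal{X}_\mathcal{A}$ does not admit any uncountable $(1+\varepsilon)$-separated set.
   Context: A set $\mathcal{Y}$ is equilateral if there is $\delta>0$ with $\|y-y'\|=\delta$ for distinct $y,y'\in\mathcal{Y}$, and $\gamma$-separated if $\|y-y'\|\ge\gamma$ for distinct $y,y'$. $c_{00}(\omega_1)$ is the set of finitely supported $x\in\mathbb{R}^{\omega_1}$; $\|x\|_\mathcal{A}=\sup_{A\in\mathcal{A}}\sqrt{\sum_{\alpha\in A}x(\alpha)^2}$ and $\mathcal{X}_\mathcal{A}$ is the closure of $c_{00}(\omega_1)$ in $\{x\in\mathbb{R}^{\omega_1}:\|x\|_\mathcal{A}<\infty\}$. For disjoint $A,B$, $A\otimes B=\{\{\alpha,\beta\}:\alpha\in A,\beta\in B\}$. A function $c=(c_0,c_1):[\omega_1]^2\to I\times J$ ($0,1\in I$, $J\ne\emptyset$) is a $T$-coloring if for every uncountable pairwise disjoint family $\{\{a_\xi(0),a_\xi(1)\}:\xi<\omega_1\}$ of pairs and all $(i_0,j_0),(i_1,j_1)\in I\times J$ there are $\xi<\eta$ with $c(\{a_\xi(0),a_\eta(0)\})=(i_0,j_0)$, $c(\{a_\xi(1),a_\eta(1)\})=(i_1,j_1)$; it is a strong $T$-coloring if moreover for every uncountable pairwise disjoint family $\{A_\xi:\xi<\omega_1\}$ of finite subsets of $\omega_1$ there are $\xi<\eta$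 with $c_0[A_\xi\otimes A_\eta]=\{0\}$ and $\xi<\eta$ with $c_0[A_\xi\otimes A_\eta]=\{1\}$. A strong $T_0$-family is $\mathcal{A}_c=\{a\subseteq\omega_1\text{ finite}:c_0[[a]^2]\subseteq\{0\}\}$ for a strong $T$-coloring $c$. *)

theory Defs
  imports "HOL-Analysis.Analysis" "HOL-Library.Countable_Set"
begin

text \<open>omega_1 is modelled by a well-ordered type whose carrier is uncountable
and all of whose proper initial segments are countable.\<close>
definition omega1_type :: "'a::wellorder itself \<Rightarrow> bool" where
  "omega1_type _ \<longleftrightarrow> uncountable (UNIV :: 'a set) \<and> (\<forall>\<alpha>::'a. countable {\<beta>. \<beta> < \<alpha>})"

definition otimes :: "'a set \<Rightarrow> 'a set \<Rightarrow> 'a set set" where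
  "otimes A B = {{\<alpha>, \<beta>} | \<alpha> \<beta>. \<alpha> \<in> A \<and> \<beta> \<in> B}"

definition pairs :: "'a set \<Rightarrow> 'a set set" where
  "pairs a = {p. p \<subseteq> a \<and> card p = 2}"

text \<open>A coloring c = (c0,c1) : [omega_1]^2 \<rightarrow> I \<times> J is a function on sets,
only its values on two-element sets matter.\<close>
definition T_coloring :: "'i::zero_neq_one set \<Rightarrow> 'j set \<Rightarrow> ('a::wellorder set \<Rightarrow> 'i \<times> 'j) \<Rightarrow> bool" where
  "T_coloring I J c \<longleftrightarrow>
     0 \<in> I \<and> 1 \<in> I \<and> J \<noteq> {} \<and>
     (\<forall>p. card p = 2 \<longrightarrow> c p \<in> I \<times> J) \<and>
     (\<forall>a0 a1 :: 'a \<Rightarrow> 'a.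
        ((\<forall>\<xi>. a0 \<xi> \<noteq> a1 \<xi>) \<and>
         (\<forall>\<xi> \<eta>. \<xi> \<noteq> \<eta> \<longrightarrow> {a0 \<xi>, a1 \<xi>} \<inter> {a0 \<eta>, a1 \<eta>} = {})) \<longrightarrow>
        (\<forall>i0\<in>I. \<forall>j0\<in>J. \<forall>i1\<in>I. \<forall>j1\<in>J.
           \<exists>\<xi> \<eta>. \<xi> < \<eta> \<and> c {a0 \<xi>, a0 \<eta>} = (i0, j0) \<and> c {a1 \<xi>, a1 \<eta>} = (i1, j1)))"

definition strong_T_coloring :: "'i::zero_neq_one set \<Rightarrow> 'j set \<Rightarrow> ('a::wellorder set \<Rightarrow> 'i \<times> 'j) \<Rightarrow> bool" where
  "strong_T_coloring I J c \<longleftrightarrow>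
     T_coloring I J c \<and>
     (\<forall>A :: 'a \<Rightarrow> 'a set.
        ((\<forall>\<xi>. finite (A \<xi>) \<and> A \<xi> \<noteq> {}) \<and>
         (\<forall>\<xi> \<eta>. \<xi> \<noteq> \<eta> \<longrightarrow> A \<xi> \<inter> A \<eta> = {})) \<longrightarrow>
        (\<exists>\<xi> \<eta>. \<xi> < \<eta> \<and> (fst \<circ> c) ` otimes (A \<xi>) (A \<eta>) = {0}) \<and>
        (\<exists>\<xi> \<eta>. \<xi> < \<eta> \<and> (fst \<circ> c) ` otimes (A \<xi>) (A \<eta>) = {1}))"

definition T0_family :: "('a set \<Rightarrow> 'i::zero \<times> 'j) \<Rightarrow> 'a set set" where
  "T0_family c = {a. finite a \<and> (fst \<circ> c) ` pairs a \<subseteq> {0}}"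

definition normA :: "'a set set \<Rightarrow> ('a \<Rightarrow> real) \<Rightarrow> real" where
  "normA \<A> x = (SUP A\<in>\<A>. sqrt (\<Sum>\<alpha>\<in>A. (x \<alpha>)\<^sup>2))"

definition normA_finite :: "'a set set \<Rightarrow> ('a \<Rightarrow> real) \<Rightarrow> bool" where
  "normA_finite \<A> x \<longleftrightarrow> bdd_above ((\<lambda>A. sqrt (\<Sum>\<alpha>\<in>A. (x \<alpha>)\<^sup>2)) ` \<A>)"

definition c00 :: "('a \<Rightarrow> real) set" where
  "c00 = {y. finite {\<alpha>. y \<alpha> \<noteq> 0}}"

definition XA :: "'a set set \<Rightarrow> ('a \<Rightarrow> real) set" where
  "XA \<A> = {x. normA_finite \<A> x \<and>
              (\<forall>e>0. \<exists>y\<in>c00. normA_finite \<A> (x - y) \<and> normA \<A> (x - y) < e)}"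

definition equilateral :: "'a set set \<Rightarrow> ('a \<Rightarrow> real) set \<Rightarrow> bool" where
  "equilateral \<A> Y \<longleftrightarrow> (\<exists>\<delta>>0. \<forall>y\<in>Y. \<forall>y'\<in>Y. y \<noteq> y' \<longrightarrow> normA \<A> (y - y') = \<delta>)"

definition separated :: "'a set set \<Rightarrow> real \<Rightarrow> ('a \<Rightarrow> real) set \<Rightarrow> bool" where
  "separated \<A> \<gamma> Y \<longleftrightarrow> (\<forall>y\<in>Y. \<forall>y'\<in>Y. y \<noteq> y' \<longrightarrow> normA \<A> (y - y') \<ge> \<gamma>)"

definition unit_sphereA :: "'a set set \<Rightarrow> ('a \<Rightarrow> real) set" where
  "unit_sphereA \<A> = {x \<in> XA \<A>. normA \<A> x = 1}"

end

theory Submission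
  imports Defs
begin

lemma normA_L2: "normA \<A> x = (SUP A\<in>\<A>. L2_set x A)"
  unfolding normA_def L2_set_def by simp

lemma normA_finite_L2: "normA_finite \<A> x = bdd_above ((\<lambda>A. L2_set x A) ` \<A>)"
  unfolding normA_finite_def L2_set_def by simp

lemma nA_upper: "normA_finite \<A> x \<Longrightarrow> A \<in> \<A> \<Longrightarrow> L2_set x A \<le> normA \<A> x"
  unfolding normA_L2 normA_finite_L2 by (rule cSUP_upper)

lemma nA_least: "\<A> \<noteq> {} \<Longrightarrow> (\<And>A. A \<in> \<A> \<Longrightarrow> L2_set x A \<le> M) \<Longrightarrow> normA \<A> x \<le> M"
  unfolding normA_L2 by (rule cSUP_least)

lemma nA_bdd: "(\<And>A. A \<in> \<A> \<Longrightarrow> L2_set x A \<le> M) \<Longrightarrow> normA_finite \<A> x"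
  unfolding normA_finite_L2 by (rule bdd_aboveI2)

lemma nA_nonneg: "{} \<in> \<A> \<Longrightarrow> normA_finite \<A> x \<Longrightarrow> 0 \<le> normA \<A> x"
  using nA_upper[of \<A> x "{}"] by simp

lemma nA_tri:
  assumes "\<A> \<noteq> {}" "normA_finite \<A> x" "normA_finite \<A> y"
  shows "normA_finite \<A> (\<lambda>i. x i + y i) \<and> normA \<A> (\<lambda>i. x i + y i) \<le> normA \<A> x + normA \<A> y"
proof -
  have *: "L2_set (\<lambda>i. x i + y i) A \<le> normA \<A> x + normA \<A> y" if "A \<in> \<A>" for A
  proof -
    have "L2_set (\<lambda>i. x i + y i) A \<le> L2_set x A + L2_set y A" by (rule L2_set_triangle_ineq)
    also have "\<dots> \<le> normA \<A> x + normA \<A> y"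
      using nA_upper[OF assms(2) that] nA_upper[OF assms(3) that] by simp
    finally show ?thesis .
  qed
  show ?thesis using nA_bdd[of \<A> "\<lambda>i. x i + y i", OF *] nA_least[OF assms(1) *] by blast
qed

lemma L2_minus: "L2_set (- x) A = L2_set x A"
  unfolding L2_set_def by simp

lemma nA_uminus: "normA \<A> (- x) = normA \<A> x" "normA_finite \<A> (- x) = normA_finite \<A> x"
  unfolding normA_L2 normA_finite_L2 L2_minus by simp_all

lemma nA_commute: "normA \<A> (x - y) = normA \<A> (y - x)" "normA_finite \<A> (x - y) = normA_finite \<A> (y - x)"
proof -
  have "- (x - y) = y - x" by (rule ext) simp
  then show "normA \<A> (x - y) = normA \<A> (y - x)" "normA_finite \<A> (x - y) = normA_finite \<A> (y - x)"
    using nA_uminus[of \<A> "x - y"] by simp_all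
qed

lemma nA_dist:
  assumes "\<A> \<noteq> {}" "normA_finite \<A> (x - w)" "normA_finite \<A> (w - y)"
  shows "normA_finite \<A> (x - y) \<and> normA \<A> (x - y) \<le> normA \<A> (x - w) + normA \<A> (w - y)"
proof -
  have "x - y = (\<lambda>i. (x - w) i + (w - y) i)" by auto
  then show ?thesis using nA_tri[OF assms] by metis
qed

lemma nA_add_sub:
  assumes "\<A> \<noteq> {}" "normA_finite \<A> x" "normA_finite \<A> y"
  shows "normA_finite \<A> (x - y)"
proof -
  have "x - y = (\<lambda>i. x i + (- y) i)" by auto
  then show ?thesis using nA_tri[OF assms(1,2), of "-y"] assms(3) nA_uminus[of \<A> y] by simp
qed

lemma T0_empty: "{} \<in> T0_family c"
  unfolding T0_family_def pairs_def by auto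
lemma T0_finite: "A \<in> T0_family c \<Longrightarrow> finite A"
  unfolding T0_family_def by auto
lemma pairs_mono: "B \<subseteq> A \<Longrightarrow> pairs B \<subseteq> pairs A"
  unfolding pairs_def by auto
lemma T0_subset: "A \<in> T0_family c \<Longrightarrow> B \<subseteq> A \<Longrightarrow> B \<in> T0_family c"
proof -
  assume a: "A \<in> T0_family c" "B \<subseteq> A"
  then have "finite B" "(fst \<circ> c) ` pairs B \<subseteq> {0}" using pairs_mono[OF a(2)] finite_subset
    unfolding T0_family_def by blast+
  then show ?thesis unfolding T0_family_def by blast
qed
lemma T0_ne: "T0_family c \<noteq> {}"
  using T0_empty by blast

lemma L2_restrict:
  assumes "finite A" "\<And>i. i \<in> A \<Longrightarrow> i \<notin> T \<Longrightarrow> x i = 0"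
  shows "L2_set x A = L2_set x (A \<inter> T)"
  unfolding L2_set_def
  by (rule arg_cong[where f=sqrt], rule sum.mono_neutral_right) (use assms in auto)

lemma L2_mono2:
  assumes "finite L" "K \<subseteq> L"
  shows "L2_set f K \<le> L2_set f L"
  unfolding L2_set_def
  by (rule real_sqrt_le_mono, rule sum_mono2) (use assms in auto)

lemma fin_supp_bound:
  assumes "finite s" "\<And>i. i \<notin> s \<Longrightarrow> w i = 0" "\<And>i. i \<in> s \<Longrightarrow> \<bar>w i\<bar> \<le> K"
  shows "normA_finite (T0_family c) w \<and> normA (T0_family c) w \<le> real (card s) * K"
proof -
  have *: "L2_set w A \<le> real (card s) * K" if "A \<in> T0_family c" for A
  proof -
    have "L2_set w A = L2_set w (A \<inter> s)"
      by (rule L2_restrict) (use that T0_finite assms(2) in auto)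
    also have "\<dots> \<le> L2_set w s" by (rule L2_mono2) (use assms in auto)
    also have "\<dots> \<le> (\<Sum>i\<in>s. \<bar>w i\<bar>)" by (rule L2_set_le_sum_abs)
    also have "\<dots> \<le> (\<Sum>i\<in>s. K)" by (rule sum_mono) (use assms in auto)
    finally show ?thesis by simp
  qed
  show ?thesis using nA_bdd[of _ w, OF *] nA_least[OF T0_ne *] by blast
qed

lemma fin_supp_bdd:
  assumes "finite s" "\<And>i. i \<notin> s \<Longrightarrow> w i = 0"
  shows "normA_finite (T0_family c) w"
proof -
  have "\<And>i. i \<in> s \<Longrightarrow> \<bar>w i\<bar> \<le> Max ((\<lambda>i. \<bar>w i\<bar>) ` s)"
    using assms(1) by (intro Max_ge) auto
  then show ?thesis using fin_supp_bound[of s w "Max ((\<lambda>i. \<bar>w i\<bar>) ` s)" c] assms by blast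
qed

lemma c00_bdd: "z \<in> c00 \<Longrightarrow> normA_finite (T0_family c) z"
  unfolding c00_def by (rule fin_supp_bdd[of "{\<alpha>. z \<alpha> \<noteq> 0}"]) auto

lemma tail_le:
  assumes "finite T" "\<And>i. i \<notin> T \<Longrightarrow> u i = 0" "\<And>i. i \<in> T \<Longrightarrow> u i = z i"
    "normA_finite (T0_family c) z"
  shows "normA (T0_family c) u \<le> normA (T0_family c) z"
proof (rule nA_least[OF T0_ne])
  fix A assume A: "A \<in> T0_family c"
  have "L2_set u A = L2_set u (A \<inter> T)"
    by (rule L2_restrict) (use A T0_finite assms(2) in auto)
  also have "\<dots> = L2_set z (A \<inter> T)" by (rule L2_set_cong) (use assms(3) in auto)
  also have "\<dots> \<le> normA (T0_family c) z"
    by (rule nA_upper[OF assms(4)]) (use T0_subset A in blast)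
  finally show "L2_set u A \<le> normA (T0_family c) z" .
qed

lemma attain:
  assumes "finite T" "\<And>i. i \<notin> T \<Longrightarrow> u i = 0"
  shows "\<exists>A\<in>T0_family c. A \<subseteq> T \<and> normA (T0_family c) u = L2_set u A"
proof -
  let ?F = "T0_family c \<inter> Pow T"
  have eq: "(\<lambda>A. L2_set u A) ` T0_family c = (\<lambda>A. L2_set u A) ` ?F"
  proof
    show "(\<lambda>A. L2_set u A) ` T0_family c \<subseteq> (\<lambda>A. L2_set u A) ` ?F"
    proof
      fix v assume "v \<in> (\<lambda>A. L2_set u A) ` T0_family c"
      then obtain A where A: "A \<in> T0_family c" "v = L2_set u A" by blast
      have "L2_set u A = L2_set u (A \<inter> T)"
        by (rule L2_restrict) (use A T0_finite assms(2) in auto)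
      moreover have "A \<inter> T \<in> ?F" using T0_subset[OF A(1)] by blast
      ultimately show "v \<in> (\<lambda>A. L2_set u A) ` ?F" using A(2) by blast
    qed
  qed blast
  have fin: "finite ((\<lambda>A. L2_set u A) ` ?F)" using assms(1) by simp
  have ne: "(\<lambda>A. L2_set u A) ` ?F \<noteq> {}" using T0_empty by blast
  have "normA (T0_family c) u = Max ((\<lambda>A. L2_set u A) ` ?F)"
    unfolding normA_L2 eq using cSup_eq_Max[OF fin ne] by simp
  moreover have "Max ((\<lambda>A. L2_set u A) ` ?F) \<in> (\<lambda>A. L2_set u A) ` ?F"
    using Max_in[OF fin ne] .
  ultimately show ?thesis by auto
qed

lemma L2_abs_cong: "(\<And>i. i \<in> A \<Longrightarrow> \<bar>f i\<bar> = \<bar>g i\<bar>) \<Longrightarrow> L2_set f A = L2_set g A"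
  unfolding L2_set_def
  by (rule arg_cong[where f=sqrt], rule sum.cong) (simp, metis power2_abs)

lemma pair_in_pairs: "x \<in> A \<Longrightarrow> y \<in> A \<Longrightarrow> x \<noteq> y \<Longrightarrow> {x, y} \<in> pairs A"
  unfolding pairs_def by auto

lemma T0_pair: "A \<in> T0_family c \<Longrightarrow> x \<in> A \<Longrightarrow> y \<in> A \<Longrightarrow> x \<noteq> y \<Longrightarrow> fst (c {x, y}) = 0"
  unfolding T0_family_def using pair_in_pairs[of x A y] by fastforce

lemma color1:
  fixes c :: "'a set \<Rightarrow> 'i::zero_neq_one \<times> 'j"
  assumes "finite T" "finite T'" "T \<inter> T' = {}"
    "\<And>i. i \<notin> T \<Longrightarrow> u i = 0" "\<And>i. i \<notin> T' \<Longrightarrow> u' i = 0"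
    "\<And>x y. x \<in> T \<Longrightarrow> y \<in> T' \<Longrightarrow> fst (c {x, y}) = 1"
  shows "normA (T0_family c) (u - u') \<le> max (normA (T0_family c) u) (normA (T0_family c) u')"
proof (rule nA_least[OF T0_ne])
  fix A assume A: "A \<in> T0_family c"
  have bu: "normA_finite (T0_family c) u" by (rule fin_supp_bdd[of T u c, OF assms(1,4)])
  have bu': "normA_finite (T0_family c) u'" by (rule fin_supp_bdd[of T' u' c, OF assms(2,5)])
  have "A \<inter> T = {} \<or> A \<inter> T' = {}"
  proof (rule ccontr)
    assume "\<not> ?thesis"
    then obtain x y where "x \<in> A" "x \<in> T" "y \<in> A" "y \<in> T'" by blast
    moreover then have "x \<noteq> y" using assms(3) by blast
    ultimately have "fst (c {x, y}) = 0" using T0_pair[OF A] by blast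
    moreover have "fst (c {x, y}) = 1" using assms(6) \<open>x \<in> T\<close> \<open>y \<in> T'\<close> by blast
    ultimately show False by simp
  qed
  then show "L2_set (u - u') A \<le> max (normA (T0_family c) u) (normA (T0_family c) u')"
  proof
    assume "A \<inter> T = {}"
    then have "L2_set (u - u') A = L2_set u' A"
    proof (intro L2_abs_cong)
      fix i assume "A \<inter> T = {}" "i \<in> A"
      then have "u i = 0" using assms(4) by blast
      then show "\<bar>(u - u') i\<bar> = \<bar>u' i\<bar>" by simp
    qed
    then show ?thesis using nA_upper[OF bu' A] by simp
  next
    assume "A \<inter> T' = {}"
    then have "L2_set (u - u') A = L2_set u A"
    proof (intro L2_abs_cong)
      fix i assume "A \<inter> T' = {}" "i \<in> A"
      then have "u' i = 0" using assms(5) by blast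
      then show "\<bar>(u - u') i\<bar> = \<bar>u i\<bar>" by simp
    qed
    then show ?thesis using nA_upper[OF bu A] by simp
  qed
qed

lemma L2_sq: "(L2_set f A)\<^sup>2 = (\<Sum>i\<in>A. (f i)\<^sup>2)"
  unfolding L2_set_def by (simp add: sum_nonneg)

lemma color0:
  fixes c :: "'a set \<Rightarrow> 'i::zero_neq_one \<times> 'j"
  assumes "finite T" "finite T'" "T \<inter> T' = {}"
    "\<And>i. i \<notin> T \<Longrightarrow> u i = 0" "\<And>i. i \<notin> T' \<Longrightarrow> u' i = 0"
    "\<And>x y. x \<in> T \<Longrightarrow> y \<in> T' \<Longrightarrow> fst (c {x, y}) = 0"
  shows "(normA (T0_family c) u)\<^sup>2 + (normA (T0_family c) u')\<^sup>2 \<le> (normA (T0_family c) (u - u'))\<^sup>2"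
proof -
  obtain A where A: "A \<in> T0_family c" "A \<subseteq> T" "normA (T0_family c) u = L2_set u A"
    using attain[of T u c, OF assms(1,4)] by blast
  obtain A' where A': "A' \<in> T0_family c" "A' \<subseteq> T'" "normA (T0_family c) u' = L2_set u' A'"
    using attain[of T' u' c, OF assms(2,5)] by blast
  have fA: "finite A" "finite A'" using A A' T0_finite by auto
  have dis: "A \<inter> A' = {}" using A(2) A'(2) assms(3) by blast
  have U: "A \<union> A' \<in> T0_family c"
    unfolding T0_family_def
  proof (intro CollectI conjI)
    show "finite (A \<union> A')" using fA by simp
    show "(fst \<circ> c) ` pairs (A \<union> A') \<subseteq> {0}"
    proof
      fix v assume "v \<in> (fst \<circ> c) ` pairs (A \<union> A')"
      then obtain p where p: "p \<subseteq> A \<union> A'" "card p = 2" "v = fst (c p)"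
        unfolding pairs_def by auto
      then obtain x y where xy: "p = {x, y}" "x \<noteq> y" using card_2_iff by metis
      have "fst (c {x, y}) = 0"
      proof -
        { assume "x \<in> A" "y \<in> A" then have ?thesis using T0_pair[OF A(1)] xy by blast }
        moreover
        { assume "x \<in> A'" "y \<in> A'" then have ?thesis using T0_pair[OF A'(1)] xy by blast }
        moreover
        { assume "x \<in> A" "y \<in> A'" then have ?thesis using assms(6) A(2) A'(2) by blast }
        moreover
        { assume "x \<in> A'" "y \<in> A" then have ?thesis using assms(6) A(2) A'(2)
            by (metis insert_commute subsetD) }
        ultimately show ?thesis using p(1) xy(1) by blast
      qed
      then show "v \<in> {0}" using p xy by simp
    qed
  qed
  have bd: "normA_finite (T0_family c) (u - u')"
    by (rule nA_add_sub[OF T0_ne fin_supp_bdd[of T u c, OF assms(1,4)] fin_supp_bdd[of T' u' c, OF assms(2,5)]])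
  have le: "L2_set (u - u') (A \<union> A') \<le> normA (T0_family c) (u - u')" by (rule nA_upper[OF bd U])
  have "(L2_set (u - u') (A \<union> A'))\<^sup>2 = (\<Sum>i\<in>A. ((u - u') i)\<^sup>2) + (\<Sum>i\<in>A'. ((u - u') i)\<^sup>2)"
    unfolding L2_sq using sum.union_disjoint[OF fA dis] by simp
  also have "(\<Sum>i\<in>A. ((u - u') i)\<^sup>2) = (\<Sum>i\<in>A. (u i)\<^sup>2)"
  proof (rule sum.cong)
    fix i assume "i \<in> A"
    then have "u' i = 0" using A(2) assms(3,5) by blast
    then show "((u - u') i)\<^sup>2 = (u i)\<^sup>2" by simp
  qed simp
  also have "(\<Sum>i\<in>A'. ((u - u') i)\<^sup>2) = (\<Sum>i\<in>A'. (u' i)\<^sup>2)"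
  proof (rule sum.cong)
    fix i assume "i \<in> A'"
    then have "u i = 0" using A'(2) assms(3,4) by blast
    then show "((u - u') i)\<^sup>2 = (u' i)\<^sup>2" by simp
  qed simp
  finally have "(L2_set (u - u') (A \<union> A'))\<^sup>2 = (normA (T0_family c) u)\<^sup>2 + (normA (T0_family c) u')\<^sup>2"
    using A(3) A'(3) L2_sq by metis
  moreover have "(L2_set (u - u') (A \<union> A'))\<^sup>2 \<le> (normA (T0_family c) (u - u'))\<^sup>2"
    using le by (simp add: power_mono)
  ultimately show ?thesis by simp
qed

lemma pigeon:
  fixes f :: "'b \<Rightarrow> 'c::countable"
  assumes "uncountable X"
  shows "\<exists>t. uncountable {x\<in>X. f x = t}"
proof (rule ccontr)
  assume "\<not> ?thesis"
  then have "\<And>t. countable {x\<in>X. f x = t}" by blast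
  then have "countable (\<Union>t\<in>UNIV. {x\<in>X. f x = t})" by (intro countable_UN) auto
  moreover have "(\<Union>t\<in>UNIV. {x\<in>X. f x = t}) = X" by blast
  ultimately show False using assms by simp
qed

lemma disj_family:
  fixes S :: "'b \<Rightarrow> 'a set"
  assumes "uncountable X" "\<And>x. x \<in> X \<Longrightarrow> finite (S x)" "\<And>\<alpha>. countable {x\<in>X. \<alpha> \<in> S x}"
  shows "\<exists>X'\<subseteq>X. uncountable X' \<and> (\<forall>x\<in>X'. \<forall>y\<in>X'. x \<noteq> y \<longrightarrow> S x \<inter> S y = {})"
proof -
  define F where "F = {D. D \<subseteq> X \<and> (\<forall>x\<in>D. \<forall>y\<in>D. x \<noteq> y \<longrightarrow> S x \<inter> S y = {})}"
  have "\<forall>C\<in>chains F. \<Union>C \<in> F"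
  proof
    fix C assume C: "C \<in> chains F"
    then have CF: "C \<subseteq> F" and ch: "\<forall>A\<in>C. \<forall>B\<in>C. A \<subseteq> B \<or> B \<subseteq> A"
      unfolding chains_def chain_subset_def by auto
    show "\<Union>C \<in> F"
      unfolding F_def
    proof (intro CollectI conjI ballI impI)
      show "\<Union>C \<subseteq> X" using CF unfolding F_def by blast
    next
      fix x y assume "x \<in> \<Union>C" "y \<in> \<Union>C" "x \<noteq> y"
      then obtain D1 D2 where D: "D1 \<in> C" "D2 \<in> C" "x \<in> D1" "y \<in> D2" by blast
      have F12: "D1 \<in> F" "D2 \<in> F" using CF D by auto
      have "D1 \<subseteq> D2 \<or> D2 \<subseteq> D1" using ch D(1,2) by blast
      then show "S x \<inter> S y = {}"
      proof
        assume "D1 \<subseteq> D2"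
        then have "x \<in> D2" "y \<in> D2" using D by auto
        then show ?thesis using F12(2) \<open>x \<noteq> y\<close> unfolding F_def by blast
      next
        assume "D2 \<subseteq> D1"
        then have "x \<in> D1" "y \<in> D1" using D by auto
        then show ?thesis using F12(1) \<open>x \<noteq> y\<close> unfolding F_def by blast
      qed
    qed
  qed
  then obtain M where M: "M \<in> F" "\<And>D. D \<in> F \<Longrightarrow> M \<subseteq> D \<Longrightarrow> D = M"
    using Zorn_Lemma[of F] by blast
  have MX: "M \<subseteq> X" and Md: "\<forall>x\<in>M. \<forall>y\<in>M. x \<noteq> y \<longrightarrow> S x \<inter> S y = {}"
    using M(1) unfolding F_def by auto
  have "uncountable M"
  proof
    assume cM: "countable M"
    define C where "C = (\<Union>x\<in>M. S x)"
    have cC: "countable C" unfolding C_def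
      using cM MX assms(2) by (intro countable_UN) (auto intro: countable_finite)
    define Bad where "Bad = (\<Union>\<alpha>\<in>C. {x\<in>X. \<alpha> \<in> S x})"
    have "countable Bad" unfolding Bad_def using cC assms(3) by (intro countable_UN) auto
    then have "countable (M \<union> Bad)" using cM by simp
    then have "\<not> X \<subseteq> M \<union> Bad" using assms(1) countable_subset by blast
    then obtain y where y: "y \<in> X" "y \<notin> M" "y \<notin> Bad" by blast
    have "S y \<inter> C = {}" using y unfolding Bad_def by blast
    have "\<forall>a\<in>insert y M. \<forall>b\<in>insert y M. a \<noteq> b \<longrightarrow> S a \<inter> S b = {}"
    proof (intro ballI impI)
      fix a b assume ab: "a \<in> insert y M" "b \<in> insert y M" "a \<noteq> b"
      show "S a \<inter> S b = {}"
      proof (cases "a = y")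
        case True
        then have "b \<in> M" using ab by auto
        then have "S b \<subseteq> C" unfolding C_def by blast
        then show ?thesis using True \<open>S y \<inter> C = {}\<close> by blast
      next
        case False
        then have aM: "a \<in> M" using ab by auto
        show ?thesis
        proof (cases "b = y")
          case True
          have "S a \<subseteq> C" using aM unfolding C_def by blast
          then show ?thesis using True \<open>S y \<inter> C = {}\<close> by blast
        next
          case False
          then have "b \<in> M" using ab by auto
          then show ?thesis using Md aM ab(3) by blast
        qed
      qed
    qed
    moreover have "insert y M \<subseteq> X" using MX y(1) by blast
    ultimately have "insert y M \<in> F" unfolding F_def by simp
    then have "insert y M = M" using M(2) by blast
    then show False using y(2) by blast
  qed
  then show ?thesis using MX Md by blast
qed


lemma delta:
  fixes S :: "'b \<Rightarrow> 'a set"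
  assumes "uncountable X" "\<forall>x\<in>X. finite (S x) \<and> card (S x) \<le> n"
  shows "\<exists>r X'. finite r \<and> X' \<subseteq> X \<and> uncountable X' \<and> (\<forall>x\<in>X'. \<forall>y\<in>X'. x \<noteq> y \<longrightarrow> S x \<inter> S y \<subseteq> r)"
  using assms
proof (induction n arbitrary: X S)
  case 0
  then have "\<forall>x\<in>X. S x = {}" by auto
  then show ?case using 0 by blast
next
  case (Suc n)
  show ?case
  proof (cases "\<exists>\<alpha>. uncountable {x\<in>X. \<alpha> \<in> S x}")
    case True
    then obtain \<alpha> where a: "uncountable {x\<in>X. \<alpha> \<in> S x}" by blast
    let ?X = "{x\<in>X. \<alpha> \<in> S x}"
    have "\<forall>x\<in>?X. finite (S x - {\<alpha>}) \<and> card (S x - {\<alpha>}) \<le> n"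
      using Suc.prems(2) by (auto simp: card_Diff_singleton)
    from Suc.IH[OF a this] obtain r X' where r: "finite r" "X' \<subseteq> ?X" "uncountable X'"
      "\<forall>x\<in>X'. \<forall>y\<in>X'. x \<noteq> y \<longrightarrow> (S x - {\<alpha>}) \<inter> (S y - {\<alpha>}) \<subseteq> r" by blast
    have "\<forall>x\<in>X'. \<forall>y\<in>X'. x \<noteq> y \<longrightarrow> S x \<inter> S y \<subseteq> insert \<alpha> r" using r(4) by blast
    then show ?thesis using r(1,2,3) by (intro exI[of _ "insert \<alpha> r"] exI[of _ X']) auto
  next
    case False
    then have "\<And>\<alpha>. countable {x\<in>X. \<alpha> \<in> S x}" by blast
    from disj_family[OF Suc.prems(1) _ this] obtain X' where "X' \<subseteq> X" "uncountable X'"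
      "\<forall>x\<in>X'. \<forall>y\<in>X'. x \<noteq> y \<longrightarrow> S x \<inter> S y = {}" using Suc.prems(2) by blast
    then show ?thesis by (intro exI[of _ "{}"] exI[of _ X']) auto
  qed
qed


lemma inj_omega1:
  fixes W :: "'b set"
  assumes "omega1_type TYPE('a::wellorder)" "uncountable W"
  shows "\<exists>g::'a \<Rightarrow> 'b. inj g \<and> range g \<subseteq> W"
proof -
  define R where "R = {(x, y::'a). x < y}"
  have wfR: "wf R" unfolding R_def by (rule Wellfounded.wellorder_class.wf)
  define H where "H = (\<lambda>h (\<xi>::'a). SOME w. w \<in> W \<and> w \<notin> h ` {\<beta>. \<beta> < \<xi>})"
  define g where "g = wfrec R H"
  have cnt: "countable {\<beta>::'a. \<beta> < \<xi>}" for \<xi> using assms(1) unfolding omega1_type_def by blast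
  have gx: "g \<xi> \<in> W \<and> g \<xi> \<notin> g ` {\<beta>. \<beta> < \<xi>}" for \<xi>
  proof -
    have "g \<xi> = H (cut g R \<xi>) \<xi>" unfolding g_def by (rule wfrec[OF wfR])
    moreover have "cut g R \<xi> ` {\<beta>. \<beta> < \<xi>} = g ` {\<beta>. \<beta> < \<xi>}"
      by (auto simp: cut_apply R_def)
    ultimately have eq: "g \<xi> = (SOME w. w \<in> W \<and> w \<notin> g ` {\<beta>. \<beta> < \<xi>})" unfolding H_def by simp
    have "countable (g ` {\<beta>. \<beta> < \<xi>})" using cnt by simp
    then have "\<not> W \<subseteq> g ` {\<beta>. \<beta> < \<xi>}" using assms(2) countable_subset by blast
    then have "\<exists>w. w \<in> W \<and> w \<notin> g ` {\<beta>. \<beta> < \<xi>}" by blast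
    then show ?thesis unfolding eq by (rule someI_ex)
  qed
  have "inj g"
  proof (rule injI)
    fix x y assume "g x = g y"
    show "x = y"
    proof (rule ccontr)
      assume "x \<noteq> y"
      then have "x < y \<or> y < x" by (rule linorder_neq_iff[THEN iffD1])
      then show False
      proof
        assume "x < y"
        then have "g x \<in> g ` {\<beta>. \<beta> < y}" by blast
        then show False using gx[of y] \<open>g x = g y\<close> by simp
      next
        assume "y < x"
        then have "g y \<in> g ` {\<beta>. \<beta> < x}" by blast
        then show False using gx[of x] \<open>g x = g y\<close> by simp
      qed
    qed
  qed
  moreover have "range g \<subseteq> W" using gx by blast
  ultimately show ?thesis by blast
qed

lemma colorW:
  fixes c :: "'a::wellorder set \<Rightarrow> 'i::zero_neq_one \<times> 'j" and W :: "'b set" and T :: "'b \<Rightarrow> 'a set"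
  assumes "strong_T_coloring I J c" "omega1_type TYPE('a)" "uncountable W"
    "\<forall>w\<in>W. finite (T w) \<and> T w \<noteq> {}" "\<forall>w\<in>W. \<forall>w'\<in>W. w \<noteq> w' \<longrightarrow> T w \<inter> T w' = {}"
    "i = 0 \<or> i = 1"
  shows "\<exists>w\<in>W. \<exists>w'\<in>W. w \<noteq> w' \<and> (\<forall>x\<in>T w. \<forall>y\<in>T w'. fst (c {x, y}) = i)"
proof -
  obtain g :: "'a \<Rightarrow> 'b" where g: "inj g" "range g \<subseteq> W" using inj_omega1[OF assms(2,3)] by blast
  define A where "A = (\<lambda>\<xi>. T (g \<xi>))"
  have h1: "\<forall>\<xi>. finite (A \<xi>) \<and> A \<xi> \<noteq> {}" unfolding A_def using g(2) assms(4) by blast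
  have h2: "\<forall>\<xi> \<eta>. \<xi> \<noteq> \<eta> \<longrightarrow> A \<xi> \<inter> A \<eta> = {}"
  proof (intro allI impI)
    fix \<xi> \<eta> :: 'a assume "\<xi> \<noteq> \<eta>"
    then have "g \<xi> \<noteq> g \<eta>" using g(1) by (simp add: inj_eq)
    then show "A \<xi> \<inter> A \<eta> = {}" unfolding A_def using g(2) assms(5) by blast
  qed
  from h1 h2 have "(\<exists>\<xi> \<eta>. \<xi> < \<eta> \<and> (fst \<circ> c) ` otimes (A \<xi>) (A \<eta>) = {0}) \<and>
        (\<exists>\<xi> \<eta>. \<xi> < \<eta> \<and> (fst \<circ> c) ` otimes (A \<xi>) (A \<eta>) = {1})"
    using assms(1) unfolding strong_T_coloring_def by blast
  then obtain \<xi> \<eta> where xe: "\<xi> < \<eta>" "(fst \<circ> c) ` otimes (A \<xi>) (A \<eta>) = {i}"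
    using assms(6) by blast
  have "\<forall>x\<in>T (g \<xi>). \<forall>y\<in>T (g \<eta>). fst (c {x, y}) = i"
  proof (intro ballI)
    fix x y assume "x \<in> T (g \<xi>)" "y \<in> T (g \<eta>)"
    then have "{x, y} \<in> otimes (A \<xi>) (A \<eta>)" unfolding otimes_def A_def by blast
    then have "(fst \<circ> c) {x, y} \<in> {i}" using xe(2) by blast
    then show "fst (c {x, y}) = i" by simp
  qed
  moreover have "g \<xi> \<noteq> g \<eta>" using xe(1) g(1) by (auto simp: inj_eq)
  ultimately show ?thesis using g(2) by blast
qed

lemma floor_close:
  assumes "\<lfloor>x / k\<rfloor> = \<lfloor>y / k\<rfloor>" "(k::real) > 0"
  shows "\<bar>x - y\<bar> < k"
proof -
  have a: "of_int \<lfloor>x / k\<rfloor> \<le> x / k" "x / k < of_int \<lfloor>x / k\<rfloor> + 1"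
    "of_int \<lfloor>y / k\<rfloor> \<le> y / k" "y / k < of_int \<lfloor>y / k\<rfloor> + 1"
    by simp_all
  have "\<bar>x / k - y / k\<bar> < 1" using a unfolding assms(1) by linarith
  moreover have "x / k - y / k = (x - y) / k" by (simp add: diff_divide_distrib)
  ultimately have "\<bar>x - y\<bar> / k < 1" using assms(2) by simp
  then show ?thesis using assms(2) by (simp add: divide_less_eq)
qed

lemma countable_subsingleton: "(\<And>a b. a \<in> E \<Longrightarrow> b \<in> E \<Longrightarrow> a = b) \<Longrightarrow> countable E"
  by (metis countable_empty countable_insert ex_in_conv insertI1 insert_absorb subsetI subset_singletonD countable_subset)

lemma main_prep:
  fixes c :: "'a::wellorder set \<Rightarrow> 'i::zero_neq_one \<times> 'j"
  assumes Y: "Y \<subseteq> XA (T0_family c)" "uncountable Y"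
    and sep: "\<And>y y'. y \<in> Y \<Longrightarrow> y' \<in> Y \<Longrightarrow> y \<noteq> y' \<Longrightarrow> \<gamma> \<le> normA (T0_family c) (y - y')"
    and e: "0 < e" "3 * e < \<gamma>"
  shows "\<exists>W T u. W \<subseteq> Y \<and> uncountable W \<and>
     (\<forall>y\<in>W. finite (T y) \<and> T y \<noteq> {} \<and> (\<forall>i. i \<notin> T y \<longrightarrow> u y i = 0) \<and>
         normA (T0_family c) (u y) \<le> normA (T0_family c) y + e) \<and>
     (\<forall>y\<in>W. \<forall>y'\<in>W. y \<noteq> y' \<longrightarrow> T y \<inter> T y' = {} \<and>
         \<bar>normA (T0_family c) (y - y') - normA (T0_family c) (u y - u y')\<bar> \<le> 3 * e)"
proof -
  let ?A = "T0_family c"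
  let ?N = "normA ?A"
  let ?B = "normA_finite ?A"
  have ne: "?A \<noteq> {}" by (rule T0_ne)
  have "\<forall>y\<in>Y. \<exists>z. z \<in> c00 \<and> ?B (y - z) \<and> ?N (y - z) < e"
    using Y(1) e(1) unfolding XA_def by blast
  then obtain z where z: "\<And>y. y \<in> Y \<Longrightarrow> z y \<in> c00 \<and> ?B (y - z y) \<and> ?N (y - z y) < e"
    by metis
  define S where "S = (\<lambda>y. {\<alpha>. z y \<alpha> \<noteq> 0})"
  have finS: "finite (S y)" if "y \<in> Y" for y using z[OF that] unfolding S_def c00_def by simp
  obtain n where n: "uncountable {y\<in>Y. card (S y) = n}" using pigeon[OF Y(2), of "\<lambda>y. card (S y)"] by blast
  let ?Y0 = "{y\<in>Y. card (S y) = n}"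
  have "\<forall>y\<in>?Y0. finite (S y) \<and> card (S y) \<le> n" using finS by auto
  from delta[OF n this] obtain r Y1 where r: "finite r" "Y1 \<subseteq> ?Y0" "uncountable Y1"
    "\<forall>x\<in>Y1. \<forall>y\<in>Y1. x \<noteq> y \<longrightarrow> S x \<inter> S y \<subseteq> r" by blast
  define \<kappa> where "\<kappa> = e / (real (card r) + 1)"
  have kpos: "\<kappa> > 0" unfolding \<kappa>_def using e(1) by simp
  have kle: "real (card r) * \<kappa> \<le> e"
  proof -
    have "real (card r) * \<kappa> = e * (real (card r) / (real (card r) + 1))" unfolding \<kappa>_def by simp
    also have "\<dots> \<le> e * 1" using e(1) by (intro mult_left_mono) auto
    finally show ?thesis by simp
  qed
  obtain L where L: "uncountable {y\<in>Y1. map (\<lambda>\<alpha>. \<lfloor>z y \<alpha> / \<kappa>\<rfloor>) (sorted_list_of_set r) = L}"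
    using pigeon[OF r(3), of "\<lambda>y. map (\<lambda>\<alpha>. \<lfloor>z y \<alpha> / \<kappa>\<rfloor>) (sorted_list_of_set r)"] by blast
  define Y2 where "Y2 = {y\<in>Y1. map (\<lambda>\<alpha>. \<lfloor>z y \<alpha> / \<kappa>\<rfloor>) (sorted_list_of_set r) = L}"
  have Y2Y: "Y2 \<subseteq> Y" using r(2) unfolding Y2_def by blast
  have close: "\<bar>z y \<alpha> - z y' \<alpha>\<bar> < \<kappa>" if "y \<in> Y2" "y' \<in> Y2" "\<alpha> \<in> r" for y y' \<alpha>
  proof -
    have "map (\<lambda>\<alpha>. \<lfloor>z y \<alpha> / \<kappa>\<rfloor>) (sorted_list_of_set r) = map (\<lambda>\<alpha>. \<lfloor>z y' \<alpha> / \<kappa>\<rfloor>) (sorted_list_of_set r)"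
      using that unfolding Y2_def by simp
    moreover have "\<alpha> \<in> set (sorted_list_of_set r)" using that(3) r(1) by simp
    ultimately have "\<lfloor>z y \<alpha> / \<kappa>\<rfloor> = \<lfloor>z y' \<alpha> / \<kappa>\<rfloor>" by (simp add: map_eq_conv)
    then show ?thesis using floor_close kpos by blast
  qed
  define T where "T = (\<lambda>y. S y - r)"
  define u where "u = (\<lambda>y \<alpha>. if \<alpha> \<in> T y then z y \<alpha> else 0)"
  define v where "v = (\<lambda>y \<alpha>. if \<alpha> \<in> r then z y \<alpha> else (0::real))"
  have zuv: "z y \<alpha> = u y \<alpha> + v y \<alpha>" for y \<alpha>
    unfolding u_def v_def T_def S_def by auto
  have finT: "finite (T y)" if "y \<in> Y" for y unfolding T_def using finS[OF that] by simp
  have u0: "\<And>i. i \<notin> T y \<Longrightarrow> u y i = 0" for y unfolding u_def by simp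
  have Bu: "?B (u y)" if "y \<in> Y" for y by (rule fin_supp_bdd[of "T y" "u y" c, OF finT[OF that] u0])
  have Bz: "?B (z y)" if "y \<in> Y" for y using z[OF that] c00_bdd by blast
  have By: "?B y" if "y \<in> Y" for y using Y(1) that unfolding XA_def by blast
  have vsmall: "?B (v y - v y') \<and> ?N (v y - v y') \<le> e" if "y \<in> Y2" "y' \<in> Y2" for y y'
  proof -
    have "?B (v y - v y') \<and> ?N (v y - v y') \<le> real (card r) * \<kappa>"
    proof (rule fin_supp_bound[OF r(1)])
      fix i assume "i \<notin> r" then show "(v y - v y') i = 0" unfolding v_def by simp
    next
      fix i assume "i \<in> r" then show "\<bar>(v y - v y') i\<bar> \<le> \<kappa>" unfolding v_def using close[OF that] by force
    qed
    then show ?thesis using kle by linarith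
  qed
  have zdiff: "z y - z y' = (\<lambda>i. (u y - u y') i + (v y - v y') i)" for y y'
    by (rule ext) (simp add: zuv)
  have udiff: "u y - u y' = (\<lambda>i. (z y - z y') i + (v y' - v y) i)" for y y'
    by (rule ext) (simp add: zuv)
  have Bzd: "?B (z y - y)" if "y \<in> Y" for y using z[OF that] nA_commute by metis
  have one_empty: "a = b" if "a \<in> Y2" "b \<in> Y2" "T a = {}" "T b = {}" for a b
  proof (rule ccontr)
    assume ab: "a \<noteq> b"
    have aY: "a \<in> Y" "b \<in> Y" using that Y2Y by auto
    have "u a - u b = (\<lambda>i. 0)" by (rule ext) (simp add: u_def that)
    then have eqz: "z a - z b = v a - v b" using zdiff[of a b] by (simp add: fun_eq_iff)
    have Bab: "?B (z a - z b)" by (rule nA_add_sub[OF ne Bz[OF aY(1)] Bz[OF aY(2)]])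
    have 1: "?B (a - z b) \<and> ?N (a - z b) \<le> ?N (a - z a) + ?N (z a - z b)"
      by (rule nA_dist[OF ne]) (use z[OF aY(1)] Bab in auto)
    have 2: "?B (a - b) \<and> ?N (a - b) \<le> ?N (a - z b) + ?N (z b - b)"
      by (rule nA_dist[OF ne]) (use 1 Bzd[OF aY(2)] in auto)
    have "?N (z b - b) < e" using z[OF aY(2)] nA_commute by metis
    moreover have "?N (z a - z b) \<le> e" using vsmall[OF that(1,2)] eqz by simp
    ultimately have "?N (a - b) < 3 * e" using 1 2 z[OF aY(1)] by linarith
    then show False using sep[OF aY ab] e(2) by linarith
  qed
  define W where "W = {y\<in>Y2. T y \<noteq> {}}"
  have "countable (Y2 - W)"
    by (rule countable_subsingleton) (use one_empty in \<open>auto simp: W_def\<close>)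
  have uW: "uncountable W"
  proof
    assume "countable W"
    then have "countable (W \<union> (Y2 - W))" using \<open>countable (Y2 - W)\<close> by (rule countable_Un)
    moreover have "W \<union> (Y2 - W) = Y2" unfolding W_def by blast
    ultimately show False using L unfolding Y2_def by simp
  qed
  have WY: "W \<subseteq> Y" using Y2Y unfolding W_def by blast
  have P1: "\<forall>y\<in>W. finite (T y) \<and> T y \<noteq> {} \<and> (\<forall>i. i \<notin> T y \<longrightarrow> u y i = 0) \<and> ?N (u y) \<le> ?N y + e"
  proof
    fix y assume yW: "y \<in> W"
    then have yY: "y \<in> Y" using WY by blast
    have "?N (u y) \<le> ?N (z y)"
      by (rule tail_le[OF finT[OF yY]]) (auto simp: u_def Bz[OF yY])
    moreover have "z y = (\<lambda>i. (z y - y) i + y i)" by (rule ext) simp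
    then have "?N (z y) \<le> ?N (z y - y) + ?N y" using nA_tri[OF ne Bzd[OF yY] By[OF yY]] by metis
    moreover have "?N (z y - y) < e" using z[OF yY] nA_commute by metis
    ultimately show "finite (T y) \<and> T y \<noteq> {} \<and> (\<forall>i. i \<notin> T y \<longrightarrow> u y i = 0) \<and> ?N (u y) \<le> ?N y + e"
      using finT[OF yY] yW unfolding W_def by (auto simp: u_def)
  qed
  have P2: "\<forall>y\<in>W. \<forall>y'\<in>W. y \<noteq> y' \<longrightarrow> T y \<inter> T y' = {} \<and> \<bar>?N (y - y') - ?N (u y - u y')\<bar> \<le> 3 * e"
  proof (intro ballI impI)
    fix a b assume ab: "a \<in> W" "b \<in> W" "a \<noteq> b"
    have a2: "a \<in> Y2" "b \<in> Y2" using ab unfolding W_def by auto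
    have a1: "a \<in> Y1" "b \<in> Y1" using a2 unfolding Y2_def by auto
    have aY: "a \<in> Y" "b \<in> Y" using Y2Y a2 by auto
    have dis: "T a \<inter> T b = {}" using r(4) a1 ab(3) unfolding T_def by blast
    have Bab: "?B (z a - z b)" by (rule nA_add_sub[OF ne Bz[OF aY(1)] Bz[OF aY(2)]])
    have Buab: "?B (u a - u b)" by (rule nA_add_sub[OF ne Bu[OF aY(1)] Bu[OF aY(2)]])
    have Byab: "?B (a - b)" by (rule nA_add_sub[OF ne By[OF aY(1)] By[OF aY(2)]])
    have za: "?N (a - z a) < e" "?N (z a - a) < e" "?B (a - z a)" "?B (z a - a)"
      using z[OF aY(1)] nA_commute by metis+
    have zb: "?N (b - z b) < e" "?N (z b - b) < e" "?B (b - z b)" "?B (z b - b)"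
      using z[OF aY(2)] nA_commute by metis+
    have 1: "?B (a - z b) \<and> ?N (a - z b) \<le> ?N (a - z a) + ?N (z a - z b)"
      by (rule nA_dist[OF ne]) (use za Bab in auto)
    have 2: "?N (a - b) \<le> ?N (a - z b) + ?N (z b - b)"
      using nA_dist[OF ne, of a "z b" b] 1 zb by blast
    have 3: "?B (z a - b) \<and> ?N (z a - b) \<le> ?N (z a - a) + ?N (a - b)"
      by (rule nA_dist[OF ne]) (use za Byab in auto)
    have 4: "?N (z a - z b) \<le> ?N (z a - b) + ?N (b - z b)"
      using nA_dist[OF ne, of "z a" b "z b"] 3 zb by blast
    have 5: "?N (z a - z b) \<le> ?N (u a - u b) + ?N (v a - v b)"
      using nA_tri[OF ne Buab conjunct1[OF vsmall[OF a2]]] zdiff[of a b] by metis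
    have 6: "?N (u a - u b) \<le> ?N (z a - z b) + ?N (v b - v a)"
      using nA_tri[OF ne Bab conjunct1[OF vsmall[OF a2(2,1)]]] udiff[of a b] by metis
    have "\<bar>?N (a - b) - ?N (u a - u b)\<bar> \<le> 3 * e"
      using 1 2 3 4 5 6 za zb vsmall[OF a2] vsmall[OF a2(2,1)] by linarith
    then show "T a \<inter> T b = {} \<and> \<bar>?N (a - b) - ?N (u a - u b)\<bar> \<le> 3 * e" using dis by blast
  qed
  show ?thesis using WY uW P1 P2 by blast
qed

theorem proposition4p3:
  fixes I :: "'i::zero_neq_one set" and J :: "'j set"
    and c :: "'a::wellorder set \<Rightarrow> 'i \<times> 'j" and \<epsilon> :: real
  assumes "omega1_type TYPE('a)"
    and "strong_T_coloring I J c"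
    and "\<epsilon> > 0"
  shows "\<not> (\<exists>Y \<subseteq> XA (T0_family c). uncountable Y \<and> equilateral (T0_family c) Y)
       \<and> \<not> (\<exists>Y \<subseteq> unit_sphereA (T0_family c). uncountable Y \<and> separated (T0_family c) (1 + \<epsilon>) Y)"
proof (intro conjI notI)
  let ?N = "normA (T0_family c)"
  assume "\<exists>Y \<subseteq> XA (T0_family c). uncountable Y \<and> equilateral (T0_family c) Y"
  then obtain Y where Y0: "Y \<subseteq> XA (T0_family c)" "uncountable Y" "equilateral (T0_family c) Y"
    by blast
  then obtain \<delta> where d: "\<delta> > 0" "\<forall>y\<in>Y. \<forall>y'\<in>Y. y \<noteq> y' \<longrightarrow> ?N (y - y') = \<delta>"
    unfolding equilateral_def by blast
  have Y: "Y \<subseteq> XA (T0_family c)" "uncountable Y" "\<delta> > 0"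
    "\<And>y y'. y \<in> Y \<Longrightarrow> y' \<in> Y \<Longrightarrow> y \<noteq> y' \<Longrightarrow> ?N (y - y') = \<delta>"
    using Y0 d by simp_all
  define e where "e = \<delta> / 100"
  have e: "0 < e" "3 * e < \<delta>" using Y(3) unfolding e_def by auto
  obtain W T u where W: "W \<subseteq> Y" "uncountable W"
    "\<forall>y\<in>W. finite (T y) \<and> T y \<noteq> {} \<and> (\<forall>i. i \<notin> T y \<longrightarrow> u y i = 0) \<and> ?N (u y) \<le> ?N y + e"
    "\<forall>y\<in>W. \<forall>y'\<in>W. y \<noteq> y' \<longrightarrow> T y \<inter> T y' = {} \<and> \<bar>?N (y - y') - ?N (u y - u y')\<bar> \<le> 3 * e"
    using main_prep[OF Y(1,2), of \<delta> e] Y(4) e by force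
  obtain k where k: "uncountable {y\<in>W. \<lfloor>?N (u y) / e\<rfloor> = k}"
    using pigeon[OF W(2), of "\<lambda>y. \<lfloor>?N (u y) / e\<rfloor>"] by blast
  define W' where "W' = {y\<in>W. \<lfloor>?N (u y) / e\<rfloor> = k}"
  have W'W: "W' \<subseteq> W" unfolding W'_def by blast
  have tclose: "\<bar>?N (u y) - ?N (u y')\<bar> < e" if "y \<in> W'" "y' \<in> W'" for y y'
    using floor_close[of "?N (u y)" e "?N (u y')"] that e(1) unfolding W'_def by simp
  have uW': "uncountable W'" using k unfolding W'_def .
  have h4: "\<forall>w\<in>W'. finite (T w) \<and> T w \<noteq> {}" using W(3) W'W by blast
  have h5: "\<forall>w\<in>W'. \<forall>w'\<in>W'. w \<noteq> w' \<longrightarrow> T w \<inter> T w' = {}" using W(4) W'W by blast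
  obtain a b where ab: "a \<in> W'" "b \<in> W'" "a \<noteq> b" "\<forall>x\<in>T a. \<forall>y\<in>T b. fst (c {x, y}) = 1"
    using colorW[OF assms(2,1) uW' h4 h5, of 1] by auto
  obtain p q where pq: "p \<in> W'" "q \<in> W'" "p \<noteq> q" "\<forall>x\<in>T p. \<forall>y\<in>T q. fst (c {x, y}) = 0"
    using colorW[OF assms(2,1) uW' h4 h5, of 0] by auto
  have abW: "a \<in> W" "b \<in> W" "p \<in> W" "q \<in> W" using ab pq W'W by auto
  have fT: "\<And>y. y \<in> W \<Longrightarrow> finite (T y)" using W(3) by blast
  have u0: "\<And>y i. y \<in> W \<Longrightarrow> i \<notin> T y \<Longrightarrow> u y i = 0" using W(3) by blast
  have dT: "\<And>y y'. y \<in> W \<Longrightarrow> y' \<in> W \<Longrightarrow> y \<noteq> y' \<Longrightarrow> T y \<inter> T y' = {}" using W(4) by blast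
  have d3: "\<And>y y'. y \<in> W \<Longrightarrow> y' \<in> W \<Longrightarrow> y \<noteq> y' \<Longrightarrow> \<bar>?N (y - y') - ?N (u y - u y')\<bar> \<le> 3 * e"
    using W(4) by blast
  have x1: "\<And>x y. x \<in> T a \<Longrightarrow> y \<in> T b \<Longrightarrow> fst (c {x, y}) = 1" using ab(4) by blast
  have c1: "?N (u a - u b) \<le> max (?N (u a)) (?N (u b))"
    by (rule color1[where T="T a" and T'="T b" and u="u a" and u'="u b" and c=c, OF fT[OF abW(1)] fT[OF abW(2)] dT[OF abW(1,2) ab(3)] u0[OF abW(1)] u0[OF abW(2)] x1])
  have x0: "\<And>x y. x \<in> T p \<Longrightarrow> y \<in> T q \<Longrightarrow> fst (c {x, y}) = 0" using pq(4) by blast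
  have c0: "(?N (u p))\<^sup>2 + (?N (u q))\<^sup>2 \<le> (?N (u p - u q))\<^sup>2"
    by (rule color0[where T="T p" and T'="T q" and u="u p" and u'="u q" and c=c, OF fT[OF abW(3)] fT[OF abW(4)] dT[OF abW(3,4) pq(3)] u0[OF abW(3)] u0[OF abW(4)] x0])
  have "a \<in> Y" "b \<in> Y" "p \<in> Y" "q \<in> Y" using abW W(1) by auto
  then have "?N (a - b) = \<delta>" "?N (p - q) = \<delta>" using Y(4) ab(3) pq(3) by auto
  then have dab: "\<bar>\<delta> - ?N (u a - u b)\<bar> \<le> 3 * e" and dpq: "\<bar>\<delta> - ?N (u p - u q)\<bar> \<le> 3 * e"
    using d3[OF abW(1,2) ab(3)] d3[OF abW(3,4) pq(3)] by auto
  define m where "m = max (?N (u a)) (?N (u b))"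
  have m1: "\<delta> - 4 * e \<le> m - e" using c1 dab unfolding m_def[symmetric] by (simp add: abs_le_iff)
  have mab: "m = ?N (u a) \<or> m = ?N (u b)" unfolding m_def max_def by simp
  have tp: "m - e \<le> ?N (u p)" "m - e \<le> ?N (u q)"
    using mab tclose[OF ab(1) pq(1)] tclose[OF ab(2) pq(1)] tclose[OF ab(1) pq(2)] tclose[OF ab(2) pq(2)]
    by (auto simp: abs_less_iff)
  have pos: "0 \<le> \<delta> - 4 * e" using e Y(3) unfolding e_def by simp
  have sq1: "(\<delta> - 4 * e)\<^sup>2 \<le> (?N (u p))\<^sup>2" using m1 tp(1) pos by (intro power_mono) auto
  have sq2: "(\<delta> - 4 * e)\<^sup>2 \<le> (?N (u q))\<^sup>2" using m1 tp(2) pos by (intro power_mono) auto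
  have nn: "0 \<le> ?N (u p - u q)"
    by (rule nA_nonneg[OF T0_empty nA_add_sub[OF T0_ne fin_supp_bdd[OF fT[OF abW(3)] u0[OF abW(3)]]
        fin_supp_bdd[OF fT[OF abW(4)] u0[OF abW(4)]]]])
  have sq3: "(?N (u p - u q))\<^sup>2 \<le> (\<delta> + 3 * e)\<^sup>2" using dpq nn by (intro power_mono) auto
  have "2 * (\<delta> - 4 * e)\<^sup>2 \<le> (\<delta> + 3 * e)\<^sup>2" using sq1 sq2 sq3 c0 by linarith
  then show False using Y(3) unfolding e_def by (simp add: power2_eq_square algebra_simps)
next
  let ?N = "normA (T0_family c)"
  assume "\<exists>Y \<subseteq> unit_sphereA (T0_family c). uncountable Y \<and> separated (T0_family c) (1 + \<epsilon>) Y"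
  then obtain Y where Y0: "Y \<subseteq> unit_sphereA (T0_family c)" "uncountable Y"
    "separated (T0_family c) (1 + \<epsilon>) Y" by blast
  have Y: "Y \<subseteq> unit_sphereA (T0_family c)" "uncountable Y"
    "\<And>y y'. y \<in> Y \<Longrightarrow> y' \<in> Y \<Longrightarrow> y \<noteq> y' \<Longrightarrow> 1 + \<epsilon> \<le> ?N (y - y')"
    using Y0 unfolding separated_def by simp_all
  have YX: "Y \<subseteq> XA (T0_family c)" and Y1: "\<And>y. y \<in> Y \<Longrightarrow> ?N y = 1"
    using Y(1) unfolding unit_sphereA_def by auto
  define e where "e = \<epsilon> / 5"
  have e: "0 < e" "3 * e < 1 + \<epsilon>" using assms(3) unfolding e_def by auto
  obtain W T u where W: "W \<subseteq> Y" "uncountable W"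
    "\<forall>y\<in>W. finite (T y) \<and> T y \<noteq> {} \<and> (\<forall>i. i \<notin> T y \<longrightarrow> u y i = 0) \<and> ?N (u y) \<le> ?N y + e"
    "\<forall>y\<in>W. \<forall>y'\<in>W. y \<noteq> y' \<longrightarrow> T y \<inter> T y' = {} \<and> \<bar>?N (y - y') - ?N (u y - u y')\<bar> \<le> 3 * e"
    using main_prep[OF YX Y(2), of "1 + \<epsilon>" e] Y(3) e by force
  have h4: "\<forall>w\<in>W. finite (T w) \<and> T w \<noteq> {}" using W(3) by blast
  have h5: "\<forall>w\<in>W. \<forall>w'\<in>W. w \<noteq> w' \<longrightarrow> T w \<inter> T w' = {}" using W(4) by blast
  obtain a b where ab: "a \<in> W" "b \<in> W" "a \<noteq> b" "\<forall>x\<in>T a. \<forall>y\<in>T b. fst (c {x, y}) = 1"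
    using colorW[OF assms(2,1) W(2) h4 h5, of 1] by auto
  have c1: "?N (u a - u b) \<le> max (?N (u a)) (?N (u b))"
    by (rule color1[where T="T a" and T'="T b" and u="u a" and u'="u b"]) (use W(3,4) ab in auto)
  have "?N (u a) \<le> 1 + e" "?N (u b) \<le> 1 + e" using W(3) ab Y1 W(1) by force+
  moreover have "?N (a - b) \<le> ?N (u a - u b) + 3 * e" using W(4) ab by force
  moreover have "1 + \<epsilon> \<le> ?N (a - b)" using Y(3) ab W(1) by blast
  ultimately show False using c1 e unfolding e_def by linarith
qed

end
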